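(* Let $X,Y\in\mathbb{R}^{n\times n}$ and define $L:\mathbb{R}^{n\times n}\to\mathbb{R}^{n\times n}$ by $L(A)=XAY$. Then $L$ maps every minimally semipositive $n\times n$ matrix to a minimally semipositive matrix if and only if either both $X$ and $Y$ are inverse nonnegative, or both $-X$ and $-Y$ are inverse nonnegative.
   Context: For a matrix or vector, $\geq 0$ means entrywise nonnegative and $>0$ entrywise positive. A matrix $A\in\mathbb{R}^{m\times n}$ is semipositive if there exists $x\in\mathbb{R}^n$ with $x\geq 0$ and $Ax>0$. $A$ is minimally semipositive if it is semipositive and no submatrix obtained from $A$ by deleting one or more columns is semipositive. A square matrix $A$ is inverse nonnegative if $A$ is invertible and $A^{-1}\geq 0$. *)

theory Defs
  imports "HOL-Analysis.Analysis"
begin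

definition nonneg_vec :: "real ^ 'n \<Rightarrow> bool" where
  "nonneg_vec x \<longleftrightarrow> (\<forall>i. x $ i \<ge> 0)"

definition pos_vec :: "real ^ 'n \<Rightarrow> bool" where
  "pos_vec x \<longleftrightarrow> (\<forall>i. x $ i > 0)"

definition nonneg_mat :: "real ^ 'n ^ 'm \<Rightarrow> bool" where
  "nonneg_mat A \<longleftrightarrow> (\<forall>i j. A $ i $ j \<ge> 0)"

text \<open>The submatrix of A consisting of the columns indexed by S is semipositive:
  there is x \<ge> 0 (in R^S) with (A restricted to columns S) x > 0; equivalently
  a vector x \<ge> 0 in R^n supported in S with A x > 0.\<close>

definition semipositive_cols :: "real ^ 'n ^ 'm \<Rightarrow> 'n set \<Rightarrow> bool" where
  "semipositive_cols A S \<longleftrightarrow>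
     (\<exists>x. nonneg_vec x \<and> (\<forall>j. j \<notin> S \<longrightarrow> x $ j = 0) \<and> pos_vec (A *v x))"

definition semipositive :: "real ^ 'n ^ 'm \<Rightarrow> bool" where
  "semipositive A \<longleftrightarrow> (\<exists>x. nonneg_vec x \<and> pos_vec (A *v x))"

definition minimally_semipositive :: "real ^ 'n ^ 'm \<Rightarrow> bool" where
  "minimally_semipositive A \<longleftrightarrow>
     semipositive A \<and> (\<forall>S. S \<subset> UNIV \<longrightarrow> \<not> semipositive_cols A S)"

definition inverse_nonnegative :: "real ^ 'n ^ 'n \<Rightarrow> bool" where
  "inverse_nonnegative A \<longleftrightarrow> invertible A \<and> nonneg_mat (matrix_inv A)"

end

theory Submission
  imports Defs
begin

lemma minv:
  fixes A :: "real^'n^'n"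
  assumes "invertible A"
  shows "A ** matrix_inv A = mat 1 \<and> matrix_inv A ** A = mat 1"
  using assms unfolding invertible_def matrix_inv_def by (rule someI_ex)

lemma minv_unique:
  fixes A B :: "real^'n^'n"
  assumes "A ** B = mat 1"
  shows "invertible A" "matrix_inv A = B"
proof -
  show inv: "invertible A" using assms invertible_right_inverse by blast
  have "matrix_inv A = matrix_inv A ** (A ** B)" using assms by simp
  also have "\<dots> = B" using minv[OF inv] by (simp add: matrix_mul_assoc)
  finally show "matrix_inv A = B" .
qed

lemma crossing:
  fixes x w :: "real^'n"
  assumes px: "pos_vec x" and wi: "w$i < 0"
  shows "\<exists>t>0. nonneg_vec (x + t *\<^sub>R w) \<and> (\<exists>j. (x + t *\<^sub>R w)$j = 0)"
proof -
  let ?S = "{j. w$j < 0}"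
  define t where "t = Min ((\<lambda>j. x$j / - w$j) ` ?S)"
  have fin: "finite ((\<lambda>j. x$j / - w$j) ` ?S)" by simp
  have ne: "(\<lambda>j. x$j / - w$j) ` ?S \<noteq> {}" using wi by auto
  obtain j where j: "w$j < 0" "t = x$j / - w$j"
    using Min_in[OF fin ne] unfolding t_def by auto
  have xj: "x$j > 0" using px unfolding pos_vec_def by auto
  have tpos: "t > 0" using j xj by (simp add: divide_pos_neg)
  have le: "t \<le> x$k / - w$k" if "w$k < 0" for k
    unfolding t_def using that fin by (intro Min_le) auto
  have nn: "nonneg_vec (x + t *\<^sub>R w)"
    unfolding nonneg_vec_def
  proof
    fix k
    show "0 \<le> (x + t *\<^sub>R w) $ k"
    proof (cases "w$k < 0")
      case True
      have "t * (- w$k) \<le> (x$k / - w$k) * (- w$k)"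
        using le[OF True] True by (intro mult_right_mono) auto
      then have "t * (- w$k) \<le> x$k" using True by simp
      then show ?thesis by simp
    next
      case False
      have "x$k > 0" using px unfolding pos_vec_def by auto
      moreover have "t * w$k \<ge> 0" using False tpos by simp
      ultimately show ?thesis by simp
    qed
  qed
  have "(x + t *\<^sub>R w)$j = 0" using j by (simp add: field_simps)
  then show ?thesis using tpos nn by blast
qed

lemma MSP_pos:
  fixes A :: "real^'n^'n"
  assumes "minimally_semipositive A" "nonneg_vec x" "pos_vec (A *v x)"
  shows "pos_vec x"
proof (rule ccontr)
  assume "\<not> pos_vec x"
  then obtain j where j0: "\<not> x$j > 0" unfolding pos_vec_def by auto
  have "0 \<le> x$j" using assms(2) unfolding nonneg_vec_def by auto
  then have xj: "x$j = 0" using j0 by linarith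
  let ?S = "{k. x$k \<noteq> 0}"
  have "?S \<subset> UNIV" using xj by auto
  moreover have "semipositive_cols A ?S"
    unfolding semipositive_cols_def using assms(2,3) by auto
  ultimately show False using assms(1) unfolding minimally_semipositive_def by blast
qed

lemma MSP_noneg:
  fixes A :: "real^'n^'n"
  assumes msp: "minimally_semipositive A" and wi: "w$i < 0" and aw: "nonneg_vec (A *v w)"
  shows False
proof -
  obtain x where x: "nonneg_vec x" "pos_vec (A *v x)"
    using msp unfolding minimally_semipositive_def semipositive_def by blast
  have px: "pos_vec x" using MSP_pos[OF msp x] .
  obtain t where t: "t > 0" "nonneg_vec (x + t *\<^sub>R w)" "\<exists>j. (x + t *\<^sub>R w)$j = 0"
    using crossing[OF px wi] by blast
  have "A *v (x + t *\<^sub>R w) = A *v x + t *\<^sub>R (A *v w)"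
    by (simp add: matrix_vector_right_distrib matrix_vector_mult_scaleR)
  moreover have "pos_vec (A *v x + t *\<^sub>R (A *v w))"
    using x(2) aw t(1) unfolding pos_vec_def nonneg_vec_def
    by (simp add: add_pos_nonneg)
  ultimately have "pos_vec (A *v (x + t *\<^sub>R w))" by simp
  then have "pos_vec (x + t *\<^sub>R w)" using MSP_pos[OF msp t(2)] by blast
  then show False using t(3) unfolding pos_vec_def by (metis less_irrefl)
qed

lemma MSP_inv:
  fixes A :: "real^'n^'n"
  assumes msp: "minimally_semipositive A"
  shows "inverse_nonnegative A"
proof -
  have "\<forall>z. A *v z = 0 \<longrightarrow> z = 0"
  proof (intro allI impI)
    fix z :: "real^'n" assume az: "A *v z = 0"
    show "z = 0"
    proof (rule ccontr)
      assume "z \<noteq> 0"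
      then obtain i where zi: "z$i \<noteq> 0" by (auto simp: vec_eq_iff)
      show False
      proof (cases "z$i < 0")
        case True
        show False using MSP_noneg[OF msp True] az unfolding nonneg_vec_def by simp
      next
        case False
        then have "((-1::real) *\<^sub>R z)$i < 0" using zi by simp
        moreover have "A *v ((-1::real) *\<^sub>R z) = 0" using az by (simp only: matrix_vector_mult_scaleR scaleR_zero_right)
        ultimately show False using MSP_noneg[OF msp] unfolding nonneg_vec_def by (metis order_refl zero_index)
      qed
    qed
  qed
  then have inv: "invertible A"
    using matrix_left_invertible_ker invertible_left_inverse by blast
  have "nonneg_mat (matrix_inv A)"
    unfolding nonneg_mat_def
  proof (intro allI, rule ccontr)
    fix j k
    assume neg: "\<not> 0 \<le> matrix_inv A $ j $ k"
    let ?w = "matrix_inv A *v axis k 1"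
    have wj: "?w $ j = matrix_inv A $ j $ k"
      by (simp add: matrix_vector_mult_def axis_def if_distrib cong: if_cong)
    have "A *v ?w = axis k 1"
      using minv[OF inv] by (simp add: matrix_vector_mul_assoc)
    then have "nonneg_vec (A *v ?w)" unfolding nonneg_vec_def by (simp add: axis_def)
    then show False using MSP_noneg[OF msp, of ?w j] wj neg by simp
  qed
  then show ?thesis using inv unfolding inverse_nonnegative_def by blast
qed

lemma inv_MSP:
  fixes A :: "real^'n^'n"
  assumes "inverse_nonnegative A"
  shows "minimally_semipositive A"
proof -
  let ?M = "matrix_inv A"
  have inv: "invertible A" and nn: "nonneg_mat ?M"
    using assms unfolding inverse_nonnegative_def by auto
  note mi = minv[OF inv]
  have "semipositive A"
    unfolding semipositive_def
  proof (intro exI conjI)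
    show "nonneg_vec (?M *v vec 1)"
      unfolding nonneg_vec_def matrix_vector_mult_def using nn unfolding nonneg_mat_def
      by (simp add: sum_nonneg)
    have "A *v (?M *v vec 1) = vec 1" using mi by (simp add: matrix_vector_mul_assoc)
    then show "pos_vec (A *v (?M *v vec 1))" unfolding pos_vec_def by simp
  qed
  moreover have "\<not> semipositive_cols A S" if sub: "S \<subset> UNIV" for S
  proof
    assume "semipositive_cols A S"
    then obtain x where x: "nonneg_vec x" "\<forall>j. j \<notin> S \<longrightarrow> x $ j = 0" "pos_vec (A *v x)"
      unfolding semipositive_cols_def by blast
    have "S \<noteq> UNIV" using sub by (simp add: psubset_eq)
    then obtain j where "j \<notin> S" by auto
    then have xj: "x$j = 0" using x by auto
    let ?y = "A *v x"
    have "x = ?M *v ?y" using mi by (simp add: matrix_vector_mul_assoc)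
    then have "(?M *v ?y)$j = 0" using xj by simp
    then have "(\<Sum>k\<in>UNIV. ?M$j$k * ?y$k) = 0"
      by (simp add: matrix_vector_mult_def)
    moreover have "\<forall>k\<in>UNIV. 0 \<le> ?M$j$k * ?y$k"
      using nn x(3) unfolding nonneg_mat_def pos_vec_def by (simp add: less_imp_le)
    ultimately have "\<forall>k\<in>UNIV. ?M$j$k * ?y$k = 0"
      using sum_nonneg_eq_0_iff[of UNIV "\<lambda>k. ?M$j$k * ?y$k"] by simp
    have z: "\<forall>k. ?M$j$k = 0"
    proof
      fix k
      have "?M$j$k * ?y$k = 0" using \<open>\<forall>k\<in>UNIV. ?M$j$k * ?y$k = 0\<close> by blast
      moreover have "?y$k > 0" using x(3) unfolding pos_vec_def by blast
      ultimately show "?M$j$k = 0" by simp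
    qed
    have "(?M ** A)$j$j = (\<Sum>k\<in>UNIV. ?M$j$k * A$k$j)"
      by (simp add: matrix_matrix_mult_def)
    also have "\<dots> = 0" using z by simp
    finally show False using mi by (simp add: mat_def)
  qed
  ultimately show ?thesis unfolding minimally_semipositive_def by blast
qed

lemma msp_iff:
  fixes A :: "real^'n^'n"
  shows "minimally_semipositive A \<longleftrightarrow> inverse_nonnegative A"
  using MSP_inv inv_MSP by blast

lemma nonneg_mult:
  fixes B C :: "real^'n^'n"
  assumes "nonneg_mat B" "nonneg_mat C"
  shows "nonneg_mat (B ** C)"
  using assms unfolding nonneg_mat_def by (simp add: matrix_matrix_mult_def sum_nonneg)

lemma lneg: fixes A B :: "real^'n^'n" shows "(-A) ** B = -(A ** B)"
  by (simp add: vec_eq_iff matrix_matrix_mult_def sum_negf)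

lemma rneg: fixes A B :: "real^'n^'n" shows "A ** (-B) = -(A ** B)"
  by (simp add: vec_eq_iff matrix_matrix_mult_def sum_negf)

lemma lin_nonneg:
  fixes a b :: real
  assumes "\<forall>t\<ge>0. 0 \<le> a + t * b"
  shows "0 \<le> b"
proof (rule ccontr)
  assume "\<not> 0 \<le> b"
  then have b: "b < 0" by simp
  define t where "t = (\<bar>a\<bar> + 1) / - b"
  have "t \<ge> 0" using b unfolding t_def by (simp add: divide_nonneg_neg)
  moreover have "t * b = - (\<bar>a\<bar> + 1)" using b unfolding t_def by (simp add: field_simps)
  ultimately show False using assms by (smt (verit))
qed

definition Em :: "'n \<Rightarrow> 'n \<Rightarrow> real^'n^'n" where
  "Em k l = (\<chi> a b. if a = k \<and> b = l then 1 else 0)"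

lemma mul_Em: fixes P :: "real^'n^'n" shows "(P ** Em k l)$i$b = (if b = l then P$i$k else 0)"
  by (simp add: Em_def matrix_matrix_mult_def if_distrib cong: if_cong)

lemma Em_mul: fixes P :: "real^'n^'n" shows "(Em k l ** P)$a$j = (if a = k then P$l$j else 0)"
proof -
  have "(Em k l ** P)$a$j = (\<Sum>m\<in>UNIV. (if a = k \<and> m = l then P$m$j else 0))"
    by (simp add: Em_def matrix_matrix_mult_def) (rule sum.cong, auto)
  also have "\<dots> = (if a = k then P$l$j else 0)"
    by (cases "a = k") simp_all
  finally show ?thesis .
qed

lemma PEQ: fixes P Q :: "real^'n^'n" shows "(P ** Em k l ** Q)$i$j = P$i$k * Q$l$j"
proof -
  have "(P ** Em k l ** Q)$i$j = (\<Sum>b\<in>UNIV. (P ** Em k l)$i$b * Q$b$j)"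
    by (simp only: matrix_matrix_mult_def[of "P ** Em k l" Q] vec_lambda_beta)
  also have "\<dots> = (\<Sum>b\<in>UNIV. (if b = l then P$i$k * Q$b$j else 0))"
    by (rule sum.cong) (auto simp: mul_Em)
  also have "\<dots> = P$i$k * Q$l$j" by simp
  finally show ?thesis .
qed

lemma msub_r: fixes A B C :: "real^'n^'n" shows "(A - B) ** C = A ** C - B ** C"
  by (simp add: vec_eq_iff matrix_matrix_mult_def sum_subtractf algebra_simps)

lemma madd_r: fixes A B C :: "real^'n^'n" shows "(A + B) ** C = A ** C + B ** C"
  by (simp add: vec_eq_iff matrix_matrix_mult_def sum.distrib algebra_simps)

lemma EE: "Em k l ** Em k l = (if k = l then Em k l else 0)"
  by (simp add: vec_eq_iff Em_mul) (simp add: Em_def)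

lemma ABinv:
  fixes t c :: real
  assumes "c * (1 + t * (if k = l then 1 else 0)) = t"
  shows "(mat 1 - c *\<^sub>R Em k l) ** (mat 1 + t *\<^sub>R Em k l) = (mat 1 :: real^'n^'n)"
proof -
  have "(mat 1 - c *\<^sub>R Em k l) ** (mat 1 + t *\<^sub>R Em k l)
    = mat 1 + (t - c) *\<^sub>R Em k l - (c * t) *\<^sub>R (Em k l ** Em k l)"
    by (simp add: matrix_add_ldistrib msub_r matrix_scalar_ac scalar_matrix_assoc[symmetric] algebra_simps)
  also have "\<dots> = mat 1" using assms
  proof (cases "k = l")
    case True
    then have "t - c = c * t" using assms by (simp add: algebra_simps)
    then show ?thesis using True by (simp add: EE)
  next
    case False
    then show ?thesis using assms by (simp add: EE)
  qed
  finally show ?thesis .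
qed


lemma inv_nz:
  fixes M :: "real^'n^'n"
  assumes "invertible M"
  shows "\<exists>i k. matrix_inv M $ i $ k \<noteq> 0"
proof (rule ccontr)
  assume "\<not> ?thesis"
  then have "matrix_inv M = 0" by (simp add: vec_eq_iff)
  then have "M ** 0 = mat 1" using minv[OF assms] by simp
  then have "(mat 1 :: real^'n^'n) = 0" by simp
  moreover have "(mat 1 :: real^'n^'n) $ a $ a = 1" for a by (simp add: mat_def)
  ultimately show False by simp
qed

lemma prod3:
  fixes X A Y :: "real^'n^'n"
  assumes "inverse_nonnegative X" "inverse_nonnegative A" "inverse_nonnegative Y"
  shows "inverse_nonnegative (X ** A ** Y)"
proof -
  let ?iX = "matrix_inv X" and ?iA = "matrix_inv A" and ?iY = "matrix_inv Y"
  have X: "X ** ?iX = mat 1" and A: "A ** ?iA = mat 1" and Y: "Y ** ?iY = mat 1"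
    using assms minv unfolding inverse_nonnegative_def by blast+
  have "X ** A ** Y ** (?iY ** ?iA ** ?iX) = X ** A ** (Y ** ?iY) ** ?iA ** ?iX"
    by (simp add: matrix_mul_assoc)
  also have "\<dots> = X ** (A ** ?iA) ** ?iX" using Y by (simp add: matrix_mul_assoc)
  also have "\<dots> = mat 1" using A X by simp
  finally have e: "X ** A ** Y ** (?iY ** ?iA ** ?iX) = mat 1" .
  have "nonneg_mat (?iY ** ?iA ** ?iX)"
    using assms nonneg_mult unfolding inverse_nonnegative_def by blast
  then show ?thesis using minv_unique[OF e] unfolding inverse_nonnegative_def by simp
qed

theorem mainTheorem6:
  fixes X Y :: "real ^ 'n ^ 'n"
  shows "(\<forall>A :: real ^ 'n ^ 'n. minimally_semipositive A \<longrightarrow>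
            minimally_semipositive (X ** A ** Y))
     \<longleftrightarrow> ((inverse_nonnegative X \<and> inverse_nonnegative Y) \<or>
          (inverse_nonnegative (- X) \<and> inverse_nonnegative (- Y)))"
proof
  assume H: "\<forall>A :: real ^ 'n ^ 'n. minimally_semipositive A \<longrightarrow>
            minimally_semipositive (X ** A ** Y)"
  then have H': "inverse_nonnegative (X ** A ** Y)" if "inverse_nonnegative A" for A
    using msp_iff that by blast
  have "inverse_nonnegative (mat 1 :: real^'n^'n)"
  proof -
    have e: "(mat 1 :: real^'n^'n) ** mat 1 = mat 1" by simp
    have "nonneg_mat (mat 1 :: real^'n^'n)" unfolding nonneg_mat_def by (simp add: mat_def)
    then show ?thesis using minv_unique[OF e] unfolding inverse_nonnegative_def by simp
  qed
  then have "invertible (X ** Y)" using H'[of "mat 1"] unfolding inverse_nonnegative_def by simp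
  then obtain M where M: "X ** Y ** M = mat 1" "M ** (X ** Y) = mat 1"
    unfolding invertible_def by blast
  have iX: "invertible X"
    using M(1) invertible_right_inverse by (metis matrix_mul_assoc)
  have iY: "invertible Y"
    using M(2) invertible_left_inverse by (metis matrix_mul_assoc)
  define P where "P = matrix_inv Y"
  define Q where "Q = matrix_inv X"
  have YP: "Y ** P = mat 1" using minv[OF iY] unfolding P_def by blast
  have XQ: "X ** Q = mat 1" using minv[OF iX] unfolding Q_def by blast
  have key: "0 \<le> P$i$k * Q$l$j" for i k l j
  proof -
    have "\<forall>t\<ge>0. 0 \<le> (P ** Q)$i$j + t * (P$i$k * Q$l$j)"
    proof (intro allI impI)
      fix t :: real assume t: "0 \<le> t"
      define c where "c = t / (1 + t * (if k = l then 1 else 0))"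
      have c: "c * (1 + t * (if k = l then 1 else 0)) = t"
        using t unfolding c_def by (cases "k = l") (auto simp: field_simps)
      let ?A = "mat 1 - c *\<^sub>R Em k l :: real^'n^'n"
      let ?B = "mat 1 + t *\<^sub>R Em k l :: real^'n^'n"
      have AB: "?A ** ?B = mat 1" using ABinv[OF c] .
      have Bnn: "nonneg_mat ?B" using t unfolding nonneg_mat_def by (simp add: mat_def Em_def)
      have "inverse_nonnegative ?A"
        using minv_unique[OF AB] Bnn unfolding inverse_nonnegative_def by simp
      then have inn: "inverse_nonnegative (X ** ?A ** Y)" by (rule H')
      have "X ** ?A ** Y ** (P ** ?B ** Q) = X ** ?A ** (Y ** P) ** ?B ** Q"
        by (simp add: matrix_mul_assoc)
      also have "\<dots> = X ** (?A ** ?B) ** Q" using YP by (simp add: matrix_mul_assoc)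
      also have "\<dots> = mat 1" using AB XQ by simp
      finally have e: "X ** ?A ** Y ** (P ** ?B ** Q) = mat 1" .
      have "nonneg_mat (P ** ?B ** Q)"
        using inn minv_unique[OF e] unfolding inverse_nonnegative_def by simp
      then have "0 \<le> (P ** ?B ** Q)$i$j" unfolding nonneg_mat_def by blast
      moreover have "P ** ?B ** Q = P ** Q + t *\<^sub>R (P ** Em k l ** Q)"
        by (simp add: matrix_add_ldistrib madd_r matrix_scalar_ac scalar_matrix_assoc)
      ultimately show "0 \<le> (P ** Q)$i$j + t * (P$i$k * Q$l$j)" by (simp add: PEQ)
    qed
    then show ?thesis by (rule lin_nonneg)
  qed
  obtain i0 k0 where p0: "P$i0$k0 \<noteq> 0" using inv_nz[OF iY] unfolding P_def by blast
  obtain l0 j0 where q0: "Q$l0$j0 \<noteq> 0" using inv_nz[OF iX] unfolding Q_def by blast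
  show "(inverse_nonnegative X \<and> inverse_nonnegative Y) \<or>
          (inverse_nonnegative (- X) \<and> inverse_nonnegative (- Y))"
  proof (cases "P$i0$k0 > 0")
    case True
    have Qn: "0 \<le> Q$l$j" for l j using key[of i0 k0 l j] True by (simp add: zero_le_mult_iff)
    then have "Q$l0$j0 > 0" using q0 by (simp add: order_less_le)
    then have Pn: "0 \<le> P$i$k" for i k using key[of i k l0 j0] by (simp add: zero_le_mult_iff)
    have "inverse_nonnegative X" using iX Qn unfolding inverse_nonnegative_def nonneg_mat_def Q_def by blast
    moreover have "inverse_nonnegative Y" using iY Pn unfolding inverse_nonnegative_def nonneg_mat_def P_def by blast
    ultimately show ?thesis by blast
  next
    case False
    then have pneg: "P$i0$k0 < 0" using p0 by simp
    have Qn: "Q$l$j \<le> 0" for l j using key[of i0 k0 l j] pneg by (simp add: zero_le_mult_iff)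
    then have "Q$l0$j0 < 0" using q0 by (simp add: order_less_le)
    then have Pn: "P$i$k \<le> 0" for i k using key[of i k l0 j0] by (simp add: zero_le_mult_iff)
    have eX: "(-X) ** (-Q) = mat 1" using XQ by (simp add: lneg rneg)
    have eY: "(-Y) ** (-P) = mat 1" using YP by (simp add: lneg rneg)
    have "inverse_nonnegative (-X)" using minv_unique[OF eX] Qn
      unfolding inverse_nonnegative_def nonneg_mat_def by simp
    moreover have "inverse_nonnegative (-Y)" using minv_unique[OF eY] Pn
      unfolding inverse_nonnegative_def nonneg_mat_def by simp
    ultimately show ?thesis by blast
  qed
next
  assume H: "(inverse_nonnegative X \<and> inverse_nonnegative Y) \<or>
          (inverse_nonnegative (- X) \<and> inverse_nonnegative (- Y))"
  show "\<forall>A :: real ^ 'n ^ 'n. minimally_semipositive A \<longrightarrow>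
            minimally_semipositive (X ** A ** Y)"
  proof (intro allI impI)
    fix A :: "real^'n^'n"
    assume "minimally_semipositive A"
    then have A: "inverse_nonnegative A" using msp_iff by blast
    have "inverse_nonnegative (X ** A ** Y)"
    proof (cases "inverse_nonnegative X \<and> inverse_nonnegative Y")
      case True
      then show ?thesis using prod3 A by blast
    next
      case False
      then have "inverse_nonnegative (-X)" "inverse_nonnegative (-Y)" using H by blast+
      then have "inverse_nonnegative ((-X) ** A ** (-Y))" using prod3 A by blast
      moreover have "(-X) ** A ** (-Y) = X ** A ** Y" by (simp add: lneg rneg)
      ultimately show ?thesis by simp
    qed
    then show "minimally_semipositive (X ** A ** Y)" using msp_iff by blast
  qed
qed

end
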